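(* Let $\Gamma=(V,E)$ be a reflexive finite $k$-separable graph such that $\Gamma^-$ is not $k$-faithful. Then: (i) the intersection of two distinct $k$-super-fragments of $\Gamma$ has cardinality less than $k$; (ii) moreover, if $k\ge 2$ and $\kappa_k(\Gamma)=\kappa_{k-1}(\Gamma)$, then the intersection of two distinct $k$-super-fragments of $\Gamma$ has cardinality less than $k-1$.
   Context: A graph is a pair $\Gamma=(V,E)$ with $E\subseteq V\times V$; finite means $V$ finite; reflexive means $(x,x)\in E$ for all $x$. $\Gamma(x)=\{y:(x,y)\in E\}$, $\Gamma(X)=\bigcup_{x\in X}\Gamma(x)$; the reverse graph is $\Gamma^-=(V,E^-)$, $E^-=\{(x,y):(y,x)\in E\}$. $\partial(X)=\Gamma(X)\setminus X$, $\nabla(X)=V\setminus\Gamma(X)$. $\Gamma$ is $k$-separable if there is a finite $X$ with $|X|\ge k$, $|\nabla(X)|\ge k$; then $\kappa_k(\Gamma)=\min\{|\partial(X)|: |X|\ge k,|\nabla(X)|\ge k\}$. A $k$-fragment is a set $X$ with $|X|\ge k$, $|\nabla(X)|\ge k$, $|\partial(X)|=\kappa_k(\Gamma)$; a $k$-atom is a $k$-fragment of minimum cardinality; a $k$-super-fragment is a $k$-fragment of maximum cardinality. A graph is $k$-faithful if $|A|\le|\nabla(A)|$ for a $k$-atom $A$ (all $k$-atoms have the same cardinality); the same notions for $\Gamma^-$ use $\Gamma^-$ in place of $\Gamma$. *)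

theory Defs
  imports Main
begin

text \<open>A graph is a pair (V,E) with E a subset of V \<times> V. The reverse graph uses converse E.\<close>

definition nbr :: "('a \<times> 'a) set \<Rightarrow> 'a set \<Rightarrow> 'a set" where
  "nbr E X = {y. \<exists>x\<in>X. (x, y) \<in> E}"

definition bdry :: "('a \<times> 'a) set \<Rightarrow> 'a set \<Rightarrow> 'a set" where
  "bdry E X = nbr E X - X"

definition nabla :: "'a set \<Rightarrow> ('a \<times> 'a) set \<Rightarrow> 'a set \<Rightarrow> 'a set" where
  "nabla V E X = V - nbr E X"

definition admissible :: "'a set \<Rightarrow> ('a \<times> 'a) set \<Rightarrow> nat \<Rightarrow> 'a set \<Rightarrow> bool" where
  "admissible V E k X \<longleftrightarrow> X \<subseteq> V \<and> finite X \<and> k \<le> card X \<and> k \<le> card (nabla V E X)"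

definition separable :: "'a set \<Rightarrow> ('a \<times> 'a) set \<Rightarrow> nat \<Rightarrow> bool" where
  "separable V E k \<longleftrightarrow> (\<exists>X. admissible V E k X)"

definition kappa :: "'a set \<Rightarrow> ('a \<times> 'a) set \<Rightarrow> nat \<Rightarrow> nat" where
  "kappa V E k = Inf {card (bdry E X) | X. admissible V E k X}"

definition fragment :: "'a set \<Rightarrow> ('a \<times> 'a) set \<Rightarrow> nat \<Rightarrow> 'a set \<Rightarrow> bool" where
  "fragment V E k X \<longleftrightarrow> admissible V E k X \<and> card (bdry E X) = kappa V E k"

definition atom :: "'a set \<Rightarrow> ('a \<times> 'a) set \<Rightarrow> nat \<Rightarrow> 'a set \<Rightarrow> bool" where
  "atom V E k X \<longleftrightarrow> fragment V E k X \<and> (\<forall>Y. fragment V E k Y \<longrightarrow> card X \<le> card Y)"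

definition super_fragment :: "'a set \<Rightarrow> ('a \<times> 'a) set \<Rightarrow> nat \<Rightarrow> 'a set \<Rightarrow> bool" where
  "super_fragment V E k X \<longleftrightarrow> fragment V E k X \<and> (\<forall>Y. fragment V E k Y \<longrightarrow> card Y \<le> card X)"

definition faithful :: "'a set \<Rightarrow> ('a \<times> 'a) set \<Rightarrow> nat \<Rightarrow> bool" where
  "faithful V E k \<longleftrightarrow> (\<forall>A. atom V E k A \<longrightarrow> card A \<le> card (nabla V E A))"

end

theory Submission
  imports Defs
begin

locale rg =
  fixes V :: "'a set" and E :: "('a \<times> 'a) set"
  assumes fin: "finite V" and sub: "E \<subseteq> V \<times> V" and refl: "\<forall>x\<in>V. (x, x) \<in> E"
begin

lemma nbr_sub: "nbr E Z \<subseteq> V" using sub by (auto simp: nbr_def)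
lemma sub_nbr: "Z \<subseteq> V \<Longrightarrow> Z \<subseteq> nbr E Z" using refl by (auto simp: nbr_def)
lemma fin_nbr: "finite (nbr E Z)" by (rule finite_subset[OF nbr_sub fin])
lemma card_nbr: "card (nbr E Z) \<le> card V" by (rule card_mono[OF fin nbr_sub])
lemma card_bdry: "Z \<subseteq> V \<Longrightarrow> card (bdry E Z) = card (nbr E Z) - card Z"
proof -
  assume Z: "Z \<subseteq> V"
  have "finite Z" using Z fin finite_subset by blast
  then show ?thesis unfolding bdry_def using card_Diff_subset[OF _ sub_nbr[OF Z]] by simp
qed
lemma card_Z: "Z \<subseteq> V \<Longrightarrow> card Z \<le> card (nbr E Z)"
  by (rule card_mono[OF fin_nbr sub_nbr])
lemma card_nabla: "card (nabla V E Z) = card V - card (nbr E Z)"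
  unfolding nabla_def by (rule card_Diff_subset[OF fin_nbr nbr_sub])

lemma kappa_le: "admissible V E k X \<Longrightarrow> kappa V E k \<le> card (bdry E X)"
  unfolding kappa_def by (rule cInf_lower) auto

lemma kappa_ex: "separable V E k \<Longrightarrow> \<exists>X. admissible V E k X \<and> card (bdry E X) = kappa V E k"
proof -
  assume "separable V E k"
  then obtain X where "admissible V E k X" unfolding separable_def by blast
  then have "{card (bdry E X) | X. admissible V E k X} \<noteq> {}" by blast
  from Inf_nat_def1[OF this] show ?thesis unfolding kappa_def by auto
qed

lemma dual:
  assumes "admissible V E k X"
  shows "admissible V (converse E) k (nabla V E X)"
    and "card (bdry (converse E) (nabla V E X)) \<le> card (bdry E X)"
proof -
  let ?W = "nabla V E X"
  have conv: "rg V (converse E)" using fin sub refl by unfold_locales auto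
  have XV: "X \<subseteq> V" "k \<le> card X" "k \<le> card ?W" using assms by (auto simp: admissible_def)
  have WV: "?W \<subseteq> V" by (auto simp: nabla_def)
  have n1: "nbr (converse E) ?W \<subseteq> V - X"
    using sub by (auto simp: nbr_def nabla_def)
  have n2: "X \<subseteq> nabla V (converse E) ?W"
    using XV(1) by (auto simp: nbr_def nabla_def)
  have c1: "card (nbr (converse E) ?W) \<le> card V - card X"
    using card_mono[OF _ n1] fin XV(1) by (simp add: card_Diff_subset finite_subset)
  have c2: "card X \<le> card (nabla V (converse E) ?W)"
    using card_mono[OF _ n2] fin by (simp add: nabla_def)
  have cW: "card ?W = card V - card (nbr E X)" by (rule card_nabla)
  have "card (nbr E X) \<le> card V" by (rule card_nbr)
  moreover have "card X \<le> card (nbr E X)" using card_Z XV(1) .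
  moreover have "card (bdry E X) = card (nbr E X) - card X" using card_bdry XV(1) .
  moreover have "card (bdry (converse E) ?W) = card (nbr (converse E) ?W) - card ?W"
    using rg.card_bdry[OF conv WV] .
  ultimately show "card (bdry (converse E) ?W) \<le> card (bdry E X)" using c1 cW by linarith
  show "admissible V (converse E) k ?W"
    using WV XV c2 fin unfolding admissible_def by (auto intro: finite_subset)
qed

lemma core:
  assumes jk: "j \<le> k" "k \<le> j + 1" and kj: "kappa V E j = kappa V E k"
    and SX: "super_fragment V E k X" and SY: "super_fragment V E k Y" and ne: "X \<noteq> Y"
    and I: "j \<le> card (X \<inter> Y)" and key: "2 * card X + kappa V E k < card V"
  shows False
proof -
  have aX: "admissible V E k X" and fX: "card (bdry E X) = kappa V E k"
    using SX by (auto simp: super_fragment_def fragment_def)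
  have aY: "admissible V E k Y" and fY: "card (bdry E Y) = kappa V E k"
    using SY by (auto simp: super_fragment_def fragment_def)
  have XV: "X \<subseteq> V" "finite X" "k \<le> card X" "k \<le> card (nabla V E X)" using aX by (auto simp: admissible_def)
  have YV: "Y \<subseteq> V" "finite Y" "k \<le> card Y" "k \<le> card (nabla V E Y)" using aY by (auto simp: admissible_def)
  have cXY: "card X = card Y" using SX SY by (auto simp: super_fragment_def intro: antisym)
  let ?I = "X \<inter> Y" and ?U = "X \<union> Y"
  have nU: "nbr E ?U = nbr E X \<union> nbr E Y" by (auto simp: nbr_def)
  have cnU: "card (nbr E ?U) = card (nbr E X \<union> nbr E Y)" using nU by simp
  have nI: "nbr E ?I \<subseteq> nbr E X \<inter> nbr E Y" by (auto simp: nbr_def)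
  have c1: "card (nbr E X \<union> nbr E Y) + card (nbr E X \<inter> nbr E Y) = card (nbr E X) + card (nbr E Y)"
    by (rule card_Un_Int[OF fin_nbr fin_nbr, symmetric])
  have c2: "card (nbr E ?I) \<le> card (nbr E X \<inter> nbr E Y)"
    by (rule card_mono[OF _ nI]) (simp add: fin_nbr)
  have c3: "card ?U + card ?I = card X + card Y"
    by (rule card_Un_Int[OF XV(2) YV(2), symmetric])
  have IV: "?I \<subseteq> V" using XV by auto
  have "nabla V E X \<subseteq> nabla V E ?I" using nI by (auto simp: nabla_def)
  then have "card (nabla V E X) \<le> card (nabla V E ?I)"
    by (rule card_mono[rotated]) (simp add: nabla_def fin)
  then have aI: "admissible V E j ?I" using IV XV I jk unfolding admissible_def by auto
  have kI: "kappa V E j \<le> card (nbr E ?I) - card ?I"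
    using kappa_le[OF aI] card_bdry[OF IV] by simp
  have UV: "?U \<subseteq> V" using XV YV by auto
  have "card X \<le> card ?U" by (rule card_mono) (use XV YV in auto)
  have XU: "X \<subset> ?U"
  proof
    show "X \<subseteq> ?U" by auto
    show "X \<noteq> ?U"
    proof
      assume "X = ?U"
      then have "Y \<subseteq> X" by auto
      then have "Y = X" using card_subset_eq[OF XV(2)] cXY by auto
      then show False using ne by simp
    qed
  qed
  have cU: "card X < card ?U" by (rule psubset_card_mono) (use XV YV XU in auto)
  have bX: "card (bdry E X) = card (nbr E X) - card X" by (rule card_bdry[OF XV(1)])
  have bY: "card (bdry E Y) = card (nbr E Y) - card Y" by (rule card_bdry[OF YV(1)])
  have bU: "card (bdry E ?U) = card (nbr E ?U) - card ?U" by (rule card_bdry[OF UV])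
  have nnU: "card (nabla V E ?U) = card V - card (nbr E ?U)" by (rule card_nabla)
  have z1: "card X \<le> card (nbr E X)" "card Y \<le> card (nbr E Y)" "card ?I \<le> card (nbr E ?I)"
    "card ?U \<le> card (nbr E ?U)"
    using card_Z XV YV IV UV by auto
  have z2: "card (nbr E ?U) \<le> card V" by (rule card_nbr)
  have aU: "admissible V E k ?U"
    unfolding admissible_def using UV XV YV nnU nU c1 c2 c3 kI kj fX fY bX bY z1 z2 key cXY I jk cU
    by auto
  have "kappa V E k \<le> card (bdry E ?U)" by (rule kappa_le[OF aU])
  moreover have "card (bdry E ?U) \<le> kappa V E k"
    using bU cnU c1 c2 c3 kI kj fX fY bX bY z1 z2 cXY by linarith
  ultimately have "fragment V E k ?U" using aU by (simp add: fragment_def)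
  then have "card ?U \<le> card X" using SX by (simp add: super_fragment_def)
  then show False using cU by simp
qed

end

theorem theorem4p3:
  fixes V :: "'a set" and E :: "('a \<times> 'a) set" and k :: nat
  assumes "finite V"
    and "E \<subseteq> V \<times> V"
    and "\<forall>x\<in>V. (x, x) \<in> E"
    and "separable V E k"
    and "\<not> faithful V (converse E) k"
  shows "(\<forall>X Y. super_fragment V E k X \<and> super_fragment V E k Y \<and> X \<noteq> Y
              \<longrightarrow> card (X \<inter> Y) < k)
       \<and> (k \<ge> 2 \<and> kappa V E k = kappa V E (k - 1) \<longrightarrow>
           (\<forall>X Y. super_fragment V E k X \<and> super_fragment V E k Y \<and> X \<noteq> Y
              \<longrightarrow> card (X \<inter> Y) < k - 1))"
proof -
  interpret rg V E using assms(1-3) by unfold_locales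
  have C: "rg V (converse E)" using assms(1-3) by unfold_locales auto
  let ?E' = "converse E"
  obtain X0 where X0: "admissible V E k X0" "card (bdry E X0) = kappa V E k"
    using kappa_ex[OF assms(4)] by blast
  have a0: "admissible V ?E' k (nabla V E X0)" using dual(1)[OF X0(1)] .
  have k1: "kappa V ?E' k \<le> kappa V E k"
    using rg.kappa_le[OF C a0] dual(2)[OF X0(1)] X0(2) by linarith
  have sep': "separable V ?E' k" using a0 unfolding separable_def by blast
  obtain A0 where A0: "admissible V ?E' k A0" "card (bdry ?E' A0) = kappa V ?E' k"
    using rg.kappa_ex[OF C sep'] by blast
  have a1: "admissible V E k (nabla V ?E' A0)" using rg.dual(1)[OF C A0(1)] by simp
  have "card (bdry E (nabla V ?E' A0)) \<le> card (bdry ?E' A0)" using rg.dual(2)[OF C A0(1)] by simp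
  then have k2: "kappa V E k \<le> kappa V ?E' k"
    using kappa_le[OF a1] A0(2) by linarith
  have kk: "kappa V ?E' k = kappa V E k" using k1 k2 by simp
  obtain A where A: "atom V ?E' k A" "card (nabla V ?E' A) < card A"
    using assms(5) unfolding faithful_def by force
  have aA: "admissible V ?E' k A" "card (bdry ?E' A) = kappa V E k"
    using A(1) kk by (auto simp: atom_def fragment_def)
  have AV: "A \<subseteq> V" using aA by (simp add: admissible_def)
  have key: "2 * card X + kappa V E k < card V" if SX: "super_fragment V E k X" for X
  proof -
    have aX: "admissible V E k X" "card (bdry E X) = kappa V E k"
      using SX by (auto simp: super_fragment_def fragment_def)
    have XV: "X \<subseteq> V" using aX by (simp add: admissible_def)
    have aW: "admissible V ?E' k (nabla V E X)" using dual(1)[OF aX(1)] .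
    have "card (bdry ?E' (nabla V E X)) \<le> kappa V E k" using dual(2)[OF aX(1)] aX(2) by simp
    moreover have "kappa V ?E' k \<le> card (bdry ?E' (nabla V E X))" by (rule rg.kappa_le[OF C aW])
    ultimately have "fragment V ?E' k (nabla V E X)" using aW kk by (simp add: fragment_def)
    then have c1: "card A \<le> card (nabla V E X)" using A(1) by (simp add: atom_def)
    have c2: "card (nabla V E X) = card V - card (nbr E X)" by (rule card_nabla)
    have c3: "card (bdry E X) = card (nbr E X) - card X" by (rule card_bdry[OF XV])
    have c4: "card (nabla V ?E' A) = card V - card (nbr ?E' A)" by (rule rg.card_nabla[OF C])
    have c5: "card (bdry ?E' A) = card (nbr ?E' A) - card A" by (rule rg.card_bdry[OF C AV])
    have c6: "card X \<le> card (nbr E X)" "card (nbr E X) \<le> card V" using card_Z[OF XV] card_nbr by auto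
    have c7: "card A \<le> card (nbr ?E' A)" "card (nbr ?E' A) \<le> card V"
      using rg.card_Z[OF C AV] rg.card_nbr[OF C] by auto
    show ?thesis using c1 c2 c3 c4 c5 c6 c7 aX(2) aA(2) A(2) by linarith
  qed
  show ?thesis
  proof (intro conjI allI impI)
    fix X Y assume h: "super_fragment V E k X \<and> super_fragment V E k Y \<and> X \<noteq> Y"
    show "card (X \<inter> Y) < k"
    proof (rule ccontr)
      assume "\<not> card (X \<inter> Y) < k"
      then show False using core[of k k X Y] h key[of X] by auto
    qed
  next
    fix X Y assume h2: "2 \<le> k \<and> kappa V E k = kappa V E (k - 1)"
      and h: "super_fragment V E k X \<and> super_fragment V E k Y \<and> X \<noteq> Y"
    show "card (X \<inter> Y) < k - 1"
    proof (rule ccontr)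
      assume "\<not> card (X \<inter> Y) < k - 1"
      then show False using core[of "k - 1" k X Y] h h2 key[of X] by auto
    qed
  qed
qed

end
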